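(* Let $M$ be a non-quasianalytic weight sequence of moderate growth. Then the derived sequences $S=S(M)$, $K=K(M)$ and $L=L(M)$ are pairwise equivalent.
   Context: A weight sequence is $M=(M_k)_{k\ge0}$ with $M_k=\mu_0\cdots\mu_k$, $1=\mu_0\le\mu_1\le\cdots$, $\mu_k\to\infty$; non-quasianalytic if $\sum1/\mu_k<\infty$; moderate growth: $\exists C\ge1\ \forall j,k: M_{j+k}\le C^{j+k}M_jM_k$. Positive sequences $M,N$ are equivalent if $\sup_{k\ge1}(M_k/N_k)^{1/k}<\infty$ and $\sup_{k\ge1}(N_k/M_k)^{1/k}<\infty$. $\omega_M(t)=\sup_k\log(t^kM_0/M_k)$, $\widetilde\omega_M=\omega_M+\log(1+t^2)$; for a pre-weight function $\omega$, $\kappa_\omega(t)=\int_1^\infty\omega(ts)s^{-2}ds$, $\varphi^*_\omega(x)=\sup_{y\ge0}(xy-\omega(e^y))$. Derived sequences: $K_j=\exp(\varphi^*_\kappa(j))$ with $\kappa=\kappa_{\widetilde\omega_M}$ replaced by an equivalent normalized (vanishing on $[0,1]$) function; $L_0=1$, $L_k=\min_{0\le j<k}(k/\sum_{\ell\ge k}\mu_\ell^{-1})^{k-j}M_j$; $S_k=\sigma_0\cdots\sigma_k$, $\sigma_0=1$, $\sigma_k=\tau_1k/\tau_k$, $\tau_k=k/\mu_k+\sum_{\ell\ge k}1/\mu_\ell$. *)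

theory Defs
  imports "HOL-Analysis.Analysis"
begin

text \<open>A weight sequence is given by its quotients mu_k; M_k = mu_0 * ... * mu_k.\<close>

definition M_seq :: "(nat \<Rightarrow> real) \<Rightarrow> nat \<Rightarrow> real" where
  "M_seq \<mu> k = (\<Prod>i\<in>{0..k}. \<mu> i)"

definition weight_seq :: "(nat \<Rightarrow> real) \<Rightarrow> bool" where
  "weight_seq \<mu> \<longleftrightarrow> \<mu> 0 = 1 \<and> mono \<mu> \<and> filterlim \<mu> at_top sequentially"

definition non_quasianalytic :: "(nat \<Rightarrow> real) \<Rightarrow> bool" where
  "non_quasianalytic \<mu> \<longleftrightarrow> summable (\<lambda>k. 1 / \<mu> k)"

definition moderate_growth :: "(nat \<Rightarrow> real) \<Rightarrow> bool" where
  "moderate_growth M \<longleftrightarrow> (\<exists>C\<ge>1. \<forall>j k. M (j + k) \<le> C ^ (j + k) * M j * M k)"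

definition seq_equiv :: "(nat \<Rightarrow> real) \<Rightarrow> (nat \<Rightarrow> real) \<Rightarrow> bool" where
  "seq_equiv M N \<longleftrightarrow>
     (\<exists>C. \<forall>k\<ge>1. (M k / N k) powr (1 / real k) \<le> C) \<and>
     (\<exists>C. \<forall>k\<ge>1. (N k / M k) powr (1 / real k) \<le> C)"

definition omega_M :: "(nat \<Rightarrow> real) \<Rightarrow> real \<Rightarrow> real" where
  "omega_M \<mu> t = (if t \<le> 0 then 0
     else (SUP k. ln (t ^ k * M_seq \<mu> 0 / M_seq \<mu> k)))"

definition omega_tilde :: "(nat \<Rightarrow> real) \<Rightarrow> real \<Rightarrow> real" where
  "omega_tilde \<mu> t = omega_M \<mu> t + ln (1 + t\<^sup>2)"

definition kappa :: "(real \<Rightarrow> real) \<Rightarrow> real \<Rightarrow> real" where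
  "kappa \<omega> t = (LINT s:{1..}|lborel. \<omega> (t * s) / s\<^sup>2)"

definition phi_star :: "(real \<Rightarrow> real) \<Rightarrow> real \<Rightarrow> real" where
  "phi_star \<omega> x = (SUP y\<in>{0..}. x * y - \<omega> (exp y))"

definition normalization_of :: "(real \<Rightarrow> real) \<Rightarrow> (real \<Rightarrow> real) \<Rightarrow> bool" where
  "normalization_of \<kappa>' \<kappa> \<longleftrightarrow>
     (\<forall>t\<in>{0..1}. \<kappa>' t = 0) \<and> (\<exists>C. \<forall>t\<ge>0. \<bar>\<kappa>' t - \<kappa> t\<bar> \<le> C)"

definition K_seq :: "(real \<Rightarrow> real) \<Rightarrow> nat \<Rightarrow> real" where
  "K_seq \<kappa>' j = exp (phi_star \<kappa>' (real j))"

definition tail_sum :: "(nat \<Rightarrow> real) \<Rightarrow> nat \<Rightarrow> real" where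
  "tail_sum \<mu> k = (\<Sum>l. 1 / \<mu> (l + k))"

definition L_seq :: "(nat \<Rightarrow> real) \<Rightarrow> nat \<Rightarrow> real" where
  "L_seq \<mu> k = (if k = 0 then 1
     else Min ((\<lambda>j. (real k / tail_sum \<mu> k) ^ (k - j) * M_seq \<mu> j) ` {0..<k}))"

definition tau :: "(nat \<Rightarrow> real) \<Rightarrow> nat \<Rightarrow> real" where
  "tau \<mu> k = real k / \<mu> k + tail_sum \<mu> k"

definition sigma :: "(nat \<Rightarrow> real) \<Rightarrow> nat \<Rightarrow> real" where
  "sigma \<mu> k = (if k = 0 then 1 else tau \<mu> 1 * real k / tau \<mu> k)"

definition S_seq :: "(nat \<Rightarrow> real) \<Rightarrow> nat \<Rightarrow> real" where
  "S_seq \<mu> k = (\<Prod>i\<in>{0..k}. sigma \<mu> i)"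

end

theory Submission
  imports Defs
begin


locale wseq =
  fixes \<mu> :: "nat \<Rightarrow> real"
  assumes ws: "weight_seq \<mu>" and nq: "non_quasianalytic \<mu>"
begin

lemma mu0: "\<mu> 0 = 1" using ws by (simp add: weight_seq_def)
lemma mono_mu: "mono \<mu>" using ws by (simp add: weight_seq_def)
lemma mu_le: "i \<le> j \<Longrightarrow> \<mu> i \<le> \<mu> j" using mono_mu by (simp add: mono_def)
lemma mu_ge1: "\<mu> i \<ge> 1" using mu_le[of 0 i] mu0 by simp
lemma mu_pos: "\<mu> i > 0" using mu_ge1[of i] by simp
lemma mu_lim: "filterlim \<mu> at_top sequentially" using ws by (simp add: weight_seq_def)
lemma summ: "summable (\<lambda>k. 1 / \<mu> k)" using nq by (simp add: non_quasianalytic_def)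
lemma summ_shift: "summable (\<lambda>l. 1 / \<mu> (l + k))"
  using summ summable_iff_shift[of "\<lambda>k. 1 / \<mu> k" k] by simp

abbreviation T where "T k \<equiv> tail_sum \<mu> k"

lemma T_pos: "T k > 0"
proof -
  have "0 < (\<Sum>l<1. 1 / \<mu> (l + k))" using mu_pos[of k] by simp
  also have "\<dots> \<le> T k" unfolding tail_sum_def
    by (rule sum_le_suminf[OF summ_shift]) (auto intro: less_imp_le mu_pos)
  finally show ?thesis .
qed

lemma T_split: "i \<le> k \<Longrightarrow> T i = (\<Sum>l\<in>{i..<k}. 1 / \<mu> l) + T k"
proof -
  assume "i \<le> k"
  then obtain d where k: "k = i + d" by (metis le_add_diff_inverse)
  have "T i = (\<Sum>n. 1 / \<mu> (n + d + i)) + (\<Sum>l<d. 1 / \<mu> (l + i))"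
    unfolding tail_sum_def using suminf_split_initial_segment[OF summ_shift[of i], of d]
    by (simp add: add.assoc)
  also have "(\<Sum>l<d. 1 / \<mu> (l + i)) = (\<Sum>l\<in>{i..<k}. 1 / \<mu> l)"
    unfolding k by (rule sum.reindex_bij_witness[where i="\<lambda>l. l - i" and j="\<lambda>l. l + i"]) auto
  also have "(\<Sum>n. 1 / \<mu> (n + d + i)) = T k" unfolding tail_sum_def k by (simp add: add_ac)
  finally show ?thesis by simp
qed

lemma T_mono: "i \<le> k \<Longrightarrow> T k \<le> T i"
  using T_split[of i k] by (auto intro!: sum_nonneg simp: less_imp_le mu_pos)

lemma T_diff_le: "i \<le> k \<Longrightarrow> T i - T k \<le> real (k - i) / \<mu> i"
proof -
  assume a: "i \<le> k"
  have "(\<Sum>l\<in>{i..<k}. 1 / \<mu> l) \<le> (\<Sum>l\<in>{i..<k}. 1 / \<mu> i)"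
    by (intro sum_mono divide_left_mono) (auto simp: mu_le mu_pos)
  then show ?thesis using T_split[OF a] by simp
qed

lemma T_ge_block: "T k \<ge> real n / \<mu> (k + n)"
proof -
  have "real n / \<mu> (k + n) = (\<Sum>l<n. 1 / \<mu> (k + n))" by simp
  also have "\<dots> \<le> (\<Sum>l<n. 1 / \<mu> (l + k))"
    by (intro sum_mono divide_left_mono) (auto simp: mu_le mu_pos)
  also have "\<dots> \<le> T k" unfolding tail_sum_def
    by (rule sum_le_suminf[OF summ_shift]) (auto intro: less_imp_le mu_pos)
  finally show ?thesis .
qed

abbreviation M where "M k \<equiv> M_seq \<mu> k"

lemma M_pos: "M k > 0" unfolding M_seq_def by (auto intro: prod_pos mu_pos)
lemma M_Suc: "M (Suc k) = M k * \<mu> (Suc k)" unfolding M_seq_def by simp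
lemma M_1: "M 1 = \<mu> 1" unfolding M_seq_def by (simp add: mu0)
lemma M_1': "M (Suc 0) = \<mu> (Suc 0)" unfolding M_seq_def by (simp add: mu0)

lemma M_split: "M (a + b) = M a * (\<Prod>i\<in>{a<..a+b}. \<mu> i)"
proof (induction b)
  case 0 then show ?case by simp
next
  case (Suc b)
  have "{a<..a + Suc b} = insert (Suc (a+b)) {a<..a+b}" by auto
  then show ?case using Suc by (simp add: M_Suc)
qed

lemma M_le_pow: "M k \<le> \<mu> k ^ k"
proof -
  have "M k = (\<Prod>i\<in>{1..k}. \<mu> i)" unfolding M_seq_def
    using prod.atLeast_Suc_atMost[of 0 k \<mu>] mu0 by (cases k) (auto simp: atLeastSucAtMost_greaterThanAtMost)
  also have "\<dots> \<le> (\<Prod>i\<in>{1..k}. \<mu> k)"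
    by (intro prod_mono) (auto simp: mu_le less_imp_le[OF mu_pos])
  finally show ?thesis by simp
qed

end



locale wseq_mg = wseq +
  fixes C :: real
  assumes C1: "C \<ge> 1" and mgC: "\<And>j k. M (j + k) \<le> C ^ (j + k) * M j * M k"
begin

lemma mu_le_pow: "k \<ge> 1 \<Longrightarrow> \<mu> k \<le> C ^ k * \<mu> 1"
proof -
  assume "k \<ge> 1"
  then obtain j where k: "k = Suc j" by (cases k) auto
  have "M j * \<mu> k = M (j + 1)" using M_Suc k by simp
  also have "\<dots> \<le> C ^ k * M j * M 1" using mgC[of j 1] k by simp
  finally have "M j * \<mu> k \<le> M j * (C ^ k * \<mu> 1)" by (simp add: M_1' mult_ac)
  then show ?thesis using M_pos[of j] by simp
qed

lemma prod_block: "\<mu> a ^ b \<le> (\<Prod>i\<in>{a<..a+b}. \<mu> i)"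
proof -
  have "\<mu> a ^ b = (\<Prod>i\<in>{a<..a+b}. \<mu> a)" by simp
  also have "\<dots> \<le> (\<Prod>i\<in>{a<..a+b}. \<mu> i)"
    by (intro prod_mono) (auto simp: mu_le less_imp_le[OF mu_pos])
  finally show ?thesis .
qed

lemma mu_double: "\<mu> (2 * k) \<le> C ^ 3 * \<mu> k"
proof (cases "k = 0")
  case True then show ?thesis using C1 mu_pos[of 0]
    by (simp add: mu0)
next
  case False
  have Cp: "C > 0" using C1 by simp
  have "M (2*k) * \<mu> (2*k) ^ (2*k) \<le> M (2*k) * (\<Prod>i\<in>{2*k<..2*k+2*k}. \<mu> i)"
    using prod_block[of "2*k" "2*k"] M_pos by (simp)
  also have "\<dots> = M (2*k + 2*k)" by (rule M_split[symmetric])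
  also have "\<dots> \<le> C ^ (4*k) * M (2*k) * M (2*k)" using mgC[of "2*k" "2*k"] by simp
  finally have "\<mu> (2*k) ^ (2*k) \<le> C ^ (4*k) * M (2*k)" using M_pos[of "2*k"]
    by (simp add: mult_ac)
  also have "\<dots> \<le> C ^ (4*k) * (C ^ (2*k) * M k * M k)"
    using mgC[of k k] Cp by (intro mult_left_mono) (auto simp: mult_2)
  also have "\<dots> \<le> C ^ (4*k) * (C ^ (2*k) * \<mu> k ^ k * \<mu> k ^ k)"
  proof -
    have mm: "M k * M k \<le> \<mu> k ^ k * \<mu> k ^ k"
      using M_le_pow[of k] M_pos[of k] by (intro mult_mono) auto
    have "C ^ (4*k) * (C ^ (2*k) * (M k * M k)) \<le> C ^ (4*k) * (C ^ (2*k) * (\<mu> k ^ k * \<mu> k ^ k))"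
      using Cp by (intro mult_left_mono mm) auto
    then show ?thesis by (simp only: mult.assoc)
  qed
  also have "\<dots> = (C ^ 3 * \<mu> k) ^ (2 * k)"
  proof -
    have e1: "\<mu> k ^ k * \<mu> k ^ k = \<mu> k ^ (2*k)" by (simp only: mult_2 power_add)
    have "(C^3) ^ (2*k) = C ^ (4*k + 2*k)" unfolding power_mult[symmetric] by (simp)
    also have "\<dots> = C ^ (4*k) * C ^ (2*k)" by (rule power_add)
    finally have e2: "C ^ (4*k) * C ^ (2*k) = (C^3) ^ (2*k)" ..
    have "C ^ (4*k) * (C ^ (2*k) * \<mu> k ^ k * \<mu> k ^ k) = (C ^ (4*k) * C ^ (2*k)) * (\<mu> k ^ k * \<mu> k ^ k)"
      by (simp only: mult_ac)
    also have "\<dots> = (C^3) ^ (2*k) * \<mu> k ^ (2*k)" by (simp only: e1 e2)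
    also have "\<dots> = (C ^ 3 * \<mu> k) ^ (2 * k)" by (rule power_mult_distrib[symmetric])
    finally show ?thesis .
  qed
  finally have fin: "\<mu> (2 * k) ^ (2 * k) \<le> (C ^ 3 * \<mu> k) ^ (2 * k)" .
  obtain m where m: "2 * k = Suc m" using False by (cases "2*k") auto
  have nn: "0 \<le> C ^ 3 * \<mu> k" using Cp mu_pos[of k] by simp
  show ?thesis using fin unfolding m by (rule power_le_imp_le_base[OF _ nn])
qed

definition D where "D = C ^ 3"
lemma D1: "D \<ge> 1" unfolding D_def using C1 by simp

lemma T_lower: "real k \<le> D * \<mu> k * T k"
proof -
  have "real k / \<mu> (k + k) \<le> T k" by (rule T_ge_block)
  moreover have "\<mu> (k + k) \<le> D * \<mu> k" using mu_double[of k] by (simp add: D_def mult_2)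
  ultimately have "real k \<le> T k * \<mu> (k + k)" using mu_pos[of "k+k"] by (simp add: field_simps)
  also have "\<dots> \<le> T k * (D * \<mu> k)" using T_pos[of k] \<open>\<mu> (k + k) \<le> D * \<mu> k\<close>
    by (intro mult_left_mono) auto
  finally show ?thesis by (simp add: mult_ac)
qed

end



lemma sum_ln_k_over_i: "(\<Sum>i\<in>{1..k}. ln (real k / real i)) \<le> real k"
proof (cases "k = 0")
  case True then show ?thesis by simp
next
  case False
  have pos: "\<And>i. i \<in> {1..k} \<Longrightarrow> real k / real i > 0" using False by auto
  have eq1: "(\<Sum>i\<in>{1..k}. ln (real k / real i)) = ln (\<Prod>i\<in>{1..k}. real k / real i)"
    using pos by (subst ln_prod) auto
  have eq2: "(\<Prod>i\<in>{1..k}. real k / real i) = real k ^ k / fact k"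
    by (simp add: prod_dividef fact_prod)
  have le: "real k ^ k / fact k \<le> exp (real k)"
  proof -
    have sm: "(\<lambda>n. real k ^ n /\<^sub>R fact n) sums exp (real k)" by (rule exp_converges)
    have "(\<Sum>n\<in>{k}. real k ^ n /\<^sub>R fact n) \<le> (\<Sum>n. real k ^ n /\<^sub>R fact n)"
      by (rule sum_le_suminf) (use sm in \<open>auto simp: sums_iff\<close>)
    also have "\<dots> = exp (real k)" using sm by (simp add: sums_iff)
    finally show ?thesis by (simp add: divide_inverse mult.commute)
  qed
  have p: "real k ^ k / fact k > 0" using False by simp
  have "ln (real k ^ k / fact k) \<le> ln (exp (real k))" using le p by (subst ln_le_cancel_iff) auto
  then show ?thesis using eq1 eq2 by simp
qed

context wseq
begin

lemma M_eq1: "M k = (\<Prod>i\<in>{1..k}. \<mu> i)"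
  unfolding M_seq_def
  using prod.atLeast_Suc_atMost[of 0 k \<mu>] mu0 by (cases k) (auto simp: atLeastSucAtMost_greaterThanAtMost)

definition nu where "nu k = real k / T k"
definition lP where "lP k = (\<Sum>i\<in>{1..k}. ln (nu i))"

lemma nu_pos: "k \<ge> 1 \<Longrightarrow> nu k > 0" unfolding nu_def using T_pos[of k] by simp
lemma nu_T: "nu k * T k = real k" unfolding nu_def using T_pos[of k] by simp
lemma nu_mono: "i \<le> k \<Longrightarrow> nu i \<le> nu k"
  unfolding nu_def using T_mono[of i k] T_pos[of i] T_pos[of k]
  by (intro frac_le) auto

lemma S_eq: "S_seq \<mu> k = (\<Prod>i\<in>{1..k}. sigma \<mu> i)"
  unfolding S_seq_def
  using prod.atLeast_Suc_atMost[of 0 k "sigma \<mu>"] by (cases k) (auto simp: sigma_def atLeastSucAtMost_greaterThanAtMost)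

definition tone where "tone = tau \<mu> 1"

lemma tau_pos: "tau \<mu> k > 0" unfolding tau_def using T_pos[of k] mu_pos[of k] by (simp add: add_nonneg_pos)
lemma tau_ge: "tau \<mu> k \<ge> T k" unfolding tau_def using mu_pos[of k] by simp

lemma sigma_pos: "sigma \<mu> k > 0"
  unfolding sigma_def using tau_pos[of 1] tau_pos[of k] by simp

lemma tone_pos: "tone > 0" unfolding tone_def by (rule tau_pos)

lemma sigma_eq: "k \<ge> 1 \<Longrightarrow> sigma \<mu> k = tone * (real k / tau \<mu> k)"
  unfolding sigma_def tone_def by simp

lemma sigma_le_nu: "k \<ge> 1 \<Longrightarrow> sigma \<mu> k \<le> tone * nu k"
proof -
  assume k: "k \<ge> 1"
  have "real k / tau \<mu> k \<le> nu k" unfolding nu_def using tau_ge[of k] T_pos[of k]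
    by (intro divide_left_mono) auto
  then show ?thesis unfolding sigma_eq[OF k] using tone_pos by (intro mult_left_mono) auto
qed

lemma sigma_le_mu: "k \<ge> 1 \<Longrightarrow> sigma \<mu> k \<le> tone * \<mu> k"
proof -
  assume k: "k \<ge> 1"
  have "real k / \<mu> k \<le> tau \<mu> k" unfolding tau_def using T_pos[of k] by simp
  then have "real k \<le> \<mu> k * tau \<mu> k" using mu_pos[of k] by (simp add: divide_simps mult.commute)
  then have "real k / tau \<mu> k \<le> \<mu> k" using tau_pos[of k] by (simp add: divide_simps)
  then show ?thesis unfolding sigma_eq[OF k] using tone_pos by (intro mult_left_mono) auto
qed

lemma S_pos: "S_seq \<mu> k > 0" unfolding S_seq_def by (auto intro: prod_pos sigma_pos)

lemma L_k_eq: "k \<ge> 1 \<Longrightarrow> L_seq \<mu> k = Min ((\<lambda>j. nu k ^ (k - j) * M j) ` {0..<k})"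
  unfolding L_seq_def nu_def by simp

lemma L_pos: "L_seq \<mu> k > 0"
proof (cases "k = 0")
  case True then show ?thesis by (simp add: L_seq_def)
next
  case False
  then have k: "k \<ge> 1" by simp
  show ?thesis unfolding L_k_eq[OF k] using nu_pos[OF k] M_pos k
    by (subst Min_gr_iff) auto
qed

lemma S_le_L: "S_seq \<mu> k \<le> tone ^ k * L_seq \<mu> k"
proof (cases "k = 0")
  case True then show ?thesis by (simp add: L_seq_def S_seq_def sigma_def)
next
  case False
  then have k: "k \<ge> 1" by simp
  have t1: "tone > 0" by (rule tone_pos)
  have all: "S_seq \<mu> k / tone ^ k \<le> nu k ^ (k - j) * M j" if j: "j < k" for j
  proof -
    have U: "{1..k} = {1..j} \<union> {j<..k}" using j by auto
    have "S_seq \<mu> k = (\<Prod>i\<in>{1..j}. sigma \<mu> i) * (\<Prod>i\<in>{j<..k}. sigma \<mu> i)"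
      unfolding S_eq U by (rule prod.union_disjoint) auto
    also have "\<dots> \<le> (\<Prod>i\<in>{1..j}. tone * \<mu> i) * (\<Prod>i\<in>{j<..k}. tone * nu k)"
    proof (rule mult_mono)
      show "(\<Prod>i\<in>{1..j}. sigma \<mu> i) \<le> (\<Prod>i\<in>{1..j}. tone * \<mu> i)"
        by (rule prod_mono) (metis atLeastAtMost_iff less_imp_le sigma_pos sigma_le_mu)
      have "\<And>i. i \<in> {j<..k} \<Longrightarrow> sigma \<mu> i \<le> tone * nu k"
      proof -
        fix i assume i: "i \<in> {j<..k}"
        then have "sigma \<mu> i \<le> tone * nu i" by (intro sigma_le_nu) auto
        also have "\<dots> \<le> tone * nu k" using i t1 nu_mono[of i k] by (intro mult_left_mono) auto
        finally show "sigma \<mu> i \<le> tone * nu k" .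
      qed
      then show "(\<Prod>i\<in>{j<..k}. sigma \<mu> i) \<le> (\<Prod>i\<in>{j<..k}. tone * nu k)"
        by (intro prod_mono) (auto intro: less_imp_le sigma_pos)
      show "0 \<le> (\<Prod>i\<in>{j<..k}. sigma \<mu> i)" by (intro prod_nonneg) (auto intro: less_imp_le sigma_pos)
      show "0 \<le> (\<Prod>i\<in>{1..j}. tone * \<mu> i)" by (intro prod_nonneg) (metis mult_nonneg_nonneg less_imp_le t1 mu_pos)
    qed
    also have "\<dots> = tone ^ k * (nu k ^ (k - j) * M j)"
    proof -
      have "card {1..j} + card {j<..k} = k" using j by simp
      then have "tone ^ j * tone ^ (k - j) = tone ^ k" by (simp add: power_add[symmetric])
      then show ?thesis using j by (simp add: prod.distrib M_eq1 power_mult_distrib mult_ac)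
    qed
    finally show "S_seq \<mu> k / tone ^ k \<le> nu k ^ (k - j) * M j"
      using t1 by (simp add: divide_simps mult.commute)
  qed
  have "S_seq \<mu> k / tone ^ k \<le> Min ((\<lambda>j. nu k ^ (k - j) * M j) ` {0..<k})"
    using k all by (subst Min_ge_iff) auto
  then show ?thesis using L_k_eq[OF k] t1 by (simp add: divide_simps mult.commute)
qed

end



context wseq
begin

lemma mu_nz[simp]: "\<mu> i \<noteq> 0" using mu_pos[of i] by simp
lemma sigma_nz[simp]: "sigma \<mu> i \<noteq> 0" using sigma_pos[of i] by simp

lemma ln_M: "ln (M j) = (\<Sum>i\<in>{1..j}. ln (\<mu> i))"
  unfolding M_eq1 by (subst ln_prod) (auto intro: mu_pos)

lemma ln_S: "ln (S_seq \<mu> k) = (\<Sum>i\<in>{1..k}. ln (sigma \<mu> i))"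
  unfolding S_eq by (subst ln_prod) (auto intro: sigma_pos)

lemma ln_S_upper: "ln (S_seq \<mu> k) \<le> lP k + real k * ln tone"
proof -
  have "ln (S_seq \<mu> k) \<le> (\<Sum>i\<in>{1..k}. ln tone + ln (nu i))"
    unfolding ln_S
  proof (rule sum_mono)
    fix i assume i: "i \<in> {1..k}"
    have "ln (sigma \<mu> i) \<le> ln (tone * nu i)"
      using sigma_le_nu[of i] i sigma_pos[of i] by (subst ln_le_cancel_iff) (auto intro: mult_pos_pos tone_pos nu_pos)
    also have "\<dots> = ln tone + ln (nu i)" using i tone_pos nu_pos[of i] by (simp add: ln_mult)
    finally show "ln (sigma \<mu> i) \<le> ln tone + ln (nu i)" .
  qed
  also have "\<dots> = lP k + real k * ln tone" by (simp add: sum.distrib lP_def)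
  finally show ?thesis .
qed

lemma ln_S_le_L: "ln (S_seq \<mu> k) \<le> ln (L_seq \<mu> k) + real k * ln tone"
proof -
  have "ln (S_seq \<mu> k) \<le> ln (tone ^ k * L_seq \<mu> k)"
    using S_le_L[of k] S_pos[of k] by (subst ln_le_cancel_iff) (auto intro: L_pos tone_pos)
  also have "\<dots> = ln (L_seq \<mu> k) + real k * ln tone"
    using tone_pos L_pos[of k] by (simp add: ln_mult ln_realpow)
  finally show ?thesis .
qed

lemma ln_L_upper: "k \<ge> 1 \<Longrightarrow> ln (L_seq \<mu> k) \<le> lP k + real k * (ln 2 + 1)"
proof -
  assume k: "k \<ge> 1"
  define v where "v = nu k"
  have vpos: "v > 0" unfolding v_def using nu_pos[OF k] .
  have vT: "v * T k = real k" unfolding v_def by (rule nu_T)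
  define js where "js = (LEAST j. k - 1 \<le> j \<or> v < \<mu> (Suc j))"
  have js_le: "js \<le> k - 1" unfolding js_def by (rule Least_le) simp
  have low: "\<mu> i \<le> v" if i: "i \<in> {1..js}" for i
  proof -
    have "i - 1 < js" using i by auto
    then have "\<not> (k - 1 \<le> i - 1 \<or> v < \<mu> (Suc (i - 1)))" unfolding js_def by (rule not_less_Least)
    then show ?thesis using i by auto
  qed
  have high: "i = k \<or> v < \<mu> i" if i: "i \<in> {js<..k}" for i
  proof (cases "js < k - 1")
    case True
    have "k - 1 \<le> js \<or> v < \<mu> (Suc js)" unfolding js_def by (rule LeastI[of _ "k - 1"]) simp
    then have "v < \<mu> (Suc js)" using True by simp
    also have "\<dots> \<le> \<mu> i" using i by (intro mu_le) auto
    finally show ?thesis by simp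
  next
    case False then show ?thesis using i js_le by auto
  qed
  have bound: "ln (L_seq \<mu> k) \<le> ln (v ^ (k - js) * M js)"
  proof -
    have "L_seq \<mu> k \<le> v ^ (k - js) * M js" unfolding L_k_eq[OF k] v_def
      using js_le k by (intro Min_le) auto
    then show ?thesis using L_pos[of k] by (subst ln_le_cancel_iff) (auto intro: mult_pos_pos vpos M_pos)
  qed
  have U: "{1..k} = {1..js} \<union> {js<..k}" using js_le k by auto
  have "ln (v ^ (k - js) * M js) = (\<Sum>i\<in>{1..js}. ln (\<mu> i)) + (\<Sum>i\<in>{js<..k}. ln v)"
    using vpos M_pos[of js] by (simp add: ln_mult ln_realpow ln_M)
  also have "\<dots> \<le> (\<Sum>i\<in>{1..js}. ln (2 * real k / T i)) + (\<Sum>i\<in>{js<..k}. ln (2 * real k / T i))"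
  proof (rule add_mono; rule sum_mono)
    fix i assume i: "i \<in> {1..js}"
    have ik: "i \<le> k" using i js_le by auto
    have "T i \<le> T k + real (k - i) / \<mu> i" using T_diff_le[OF ik] by linarith
    then have "\<mu> i * T i \<le> \<mu> i * (T k + real (k - i) / \<mu> i)" using mu_pos[of i]
      by (intro mult_left_mono) auto
    then have "\<mu> i * T i \<le> \<mu> i * T k + real (k - i)" using mu_pos[of i]
      by (simp add: distrib_left)
    also have "\<dots> \<le> v * T k + real k" using low[OF i] T_pos[of k]
      by (intro add_mono mult_right_mono) auto
    finally have "\<mu> i \<le> 2 * real k / T i" using vT T_pos[of i] by (simp add: field_simps)
    then show "ln (\<mu> i) \<le> ln (2 * real k / T i)" using mu_pos[of i] by simp
  next
    fix i assume i: "i \<in> {js<..k}"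
    have "v * T i \<le> 2 * real k"
    proof (cases "i = k")
      case True then show ?thesis using vT by simp
    next
      case False
      then have vl: "v < \<mu> i" using high[OF i] by simp
      have "T i \<le> T k + real (k - i) / \<mu> i" using T_diff_le[of i k] i by auto
      then have "v * T i \<le> v * T k + v * (real (k - i) / \<mu> i)" using vpos
        by (metis distrib_left mult_le_cancel_left_pos)
      also have "v * (real (k - i) / \<mu> i) \<le> real (k - i)"
        using vl mu_pos[of i] by (simp add: field_simps mult_right_mono)
      finally show ?thesis using vT i by auto
    qed
    then have "v \<le> 2 * real k / T i" using T_pos[of i] by (simp add: field_simps)
    then show "ln v \<le> ln (2 * real k / T i)" using vpos by simp
  qed
  also have "\<dots> = (\<Sum>i\<in>{1..k}. ln (2 * real k / T i))"
    unfolding U by (rule sum.union_disjoint[symmetric]) auto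
  also have "\<dots> = (\<Sum>i\<in>{1..k}. ln 2 + ln (real k / real i) + ln (nu i))"
  proof (rule sum.cong[OF refl])
    fix i assume i: "i \<in> {1..k}"
    have e: "2 * real k / T i = (2 * (real k / real i)) * nu i" using i T_pos[of i] unfolding nu_def by auto
    have p1: "real k / real i > 0" using i by auto
    have p2: "nu i > 0" using i nu_pos by auto
    have "ln (2 * (real k / real i) * nu i) = ln (2 * (real k / real i)) + ln (nu i)"
      using p1 p2 by (intro ln_mult_pos) auto
    also have "ln (2 * (real k / real i)) = ln 2 + ln (real k / real i)"
      using p1 by (intro ln_mult_pos) auto
    finally show "ln (2 * real k / T i) = ln 2 + ln (real k / real i) + ln (nu i)" unfolding e .
  qed
  also have "\<dots> = real k * ln 2 + (\<Sum>i\<in>{1..k}. ln (real k / real i)) + lP k"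
    by (simp add: sum.distrib lP_def)
  also have "\<dots> \<le> real k * ln 2 + real k + lP k" using sum_ln_k_over_i[of k] by simp
  finally show ?thesis using bound by (simp add: algebra_simps)
qed

end

context wseq_mg
begin

lemma tau_le: "tau \<mu> k \<le> (D + 1) * T k"
proof -
  have "real k / \<mu> k \<le> D * T k" using T_lower[of k] mu_pos[of k] by (simp add: field_simps mult_ac)
  then show ?thesis unfolding tau_def by (simp add: algebra_simps)
qed

lemma sigma_ge_nu: "k \<ge> 1 \<Longrightarrow> tone * nu k / (D + 1) \<le> sigma \<mu> k"
proof -
  assume k: "k \<ge> 1"
  have D0: "D + 1 > 0" using D1 by simp
  have "nu k / (D + 1) \<le> real k / tau \<mu> k" unfolding nu_def
    using tau_le[of k] tau_pos[of k] T_pos[of k] D0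
    by (simp add: divide_simps mult_left_mono mult.commute)
  then have "tone * (nu k / (D + 1)) \<le> tone * (real k / tau \<mu> k)" using tone_pos by (intro mult_left_mono) auto
  then show ?thesis unfolding sigma_eq[OF k] by simp
qed

lemma ln_S_lower: "lP k + real k * ln (tone / (D + 1)) \<le> ln (S_seq \<mu> k)"
proof -
  have D0: "D + 1 > 0" using D1 by simp
  have "lP k + real k * ln (tone / (D + 1)) = (\<Sum>i\<in>{1..k}. ln (tone * nu i / (D + 1)))"
  proof -
    have "(\<Sum>i\<in>{1..k}. ln (tone * nu i / (D + 1))) = (\<Sum>i\<in>{1..k}. ln (tone / (D + 1)) + ln (nu i))"
    proof (rule sum.cong[OF refl])
      fix i assume "i \<in> {1..k}"
      then have "nu i > 0" using nu_pos by auto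
      have e: "tone * nu i / (D + 1) = (tone / (D + 1)) * nu i" by simp
      have "tone / (D + 1) > 0" using tone_pos D0 by simp
      then show "ln (tone * nu i / (D + 1)) = ln (tone / (D + 1)) + ln (nu i)"
        unfolding e using \<open>nu i > 0\<close> by (rule ln_mult_pos)
    qed
    then show ?thesis by (simp add: sum.distrib lP_def)
  qed
  also have "\<dots> \<le> ln (S_seq \<mu> k)" unfolding ln_S
    using sigma_ge_nu tone_pos nu_pos D0 sigma_pos
    by (intro sum_mono) (subst ln_le_cancel_iff; auto)
  finally show ?thesis .
qed

end



definition lp :: "real \<Rightarrow> real" where "lp x = max 0 (ln x)"
definition gg :: "real \<Rightarrow> real" where "gg a = (if 1 \<le> a then 1 + ln a else a)"

lemma lp_nonneg: "lp x \<ge> 0" unfolding lp_def by simp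
lemma lp_le: "x > 0 \<Longrightarrow> lp x \<le> x"
  unfolding lp_def using ln_le_minus_one[of x] by auto
lemma gg_nonneg: "a > 0 \<Longrightarrow> gg a \<ge> 0" unfolding gg_def by auto
lemma gg_le: "a > 0 \<Longrightarrow> gg a \<le> a"
  unfolding gg_def using ln_le_minus_one[of a] by auto

lemma F_tendsto: fixes a :: real shows "a > 0 \<Longrightarrow> ((\<lambda>x. - (1 + ln (a * x)) / x) \<longlongrightarrow> 0) at_top"
proof -
  assume a: "a > 0"
  have "((\<lambda>x. - ((1 + ln a) * inverse x + ln x / x)) \<longlongrightarrow> - ((1 + ln a) * 0 + 0)) at_top"
  proof -
    have i0: "((\<lambda>x::real. inverse x) \<longlongrightarrow> 0) at_top" by (rule tendsto_inverse_0_at_top[OF filterlim_ident])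
    have "((\<lambda>x. (1 + ln a) * inverse x) \<longlongrightarrow> (1 + ln a) * 0) at_top" using i0 by (intro tendsto_mult tendsto_const)
    from tendsto_add[OF this ln_x_over_x_tendsto_0] show ?thesis by (rule tendsto_minus)
  qed
  moreover have "\<forall>\<^sub>F x in at_top. - ((1 + ln a) * inverse x + ln x / x) = - (1 + ln (a * x)) / x"
    using eventually_gt_at_top[of 0]
    by eventually_elim (use a in \<open>auto simp: ln_mult field_simps\<close>)
  ultimately show ?thesis by (simp add: tendsto_cong)
qed

lemma integral_lp: 
  fixes a :: real
  assumes a: "a > 0"
  shows "(\<integral>\<^sup>+s. ennreal (lp (a * s) / s\<^sup>2) * indicator {1..} s \<partial>lborel) = ennreal (gg a)"
proof -
  define c where "c = max 1 (1 / a)"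
  have c1: "c \<ge> 1" unfolding c_def by simp
  have ac: "a * c \<ge> 1" unfolding c_def using a by (auto simp: field_simps max_def)
  have "(\<integral>\<^sup>+s. ennreal (lp (a * s) / s\<^sup>2) * indicator {1..} s \<partial>lborel)
      = (\<integral>\<^sup>+s. ennreal (ln (a * s) / s\<^sup>2) * indicator {c..} s \<partial>lborel)"
  proof (rule nn_integral_cong)
    fix s :: real
    show "ennreal (lp (a * s) / s\<^sup>2) * indicator {1..} s = ennreal (ln (a * s) / s\<^sup>2) * indicator {c..} s"
    proof (cases "s \<ge> c")
      case True
      then have "a * s \<ge> 1" using ac a by (smt (verit) mult_left_mono)
      then show ?thesis using True c1 by (simp add: lp_def indicator_def)
    next
      case False
      show ?thesis
      proof (cases "s \<ge> 1")
        case True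
        have "a * s < 1"
        proof (cases "1 \<le> 1 / a")
          case True
          then have "c = 1 / a" unfolding c_def by simp
          then show ?thesis using False a mult_strict_left_mono[of s c a] by (simp add: field_simps)
        next
          case F2: False
          then have "c = 1" unfolding c_def by simp
          then show ?thesis using False True by simp
        qed
        then have "lp (a * s) = 0" unfolding lp_def using a True by auto
        then show ?thesis using False by (simp add: indicator_def)
      next
        case F3: False
        then show ?thesis using False c1 by (simp add: indicator_def)
      qed
    qed
  qed
  also have "\<dots> = 0 - (- (1 + ln (a * c)) / c)"
  proof (rule nn_integral_FTC_atLeast)
    show "(\<lambda>x. ln (a * x) / x\<^sup>2) \<in> borel_measurable borel" by measurable
    show "\<And>x. c \<le> x \<Longrightarrow> ((\<lambda>x. - (1 + ln (a * x)) / x) has_real_derivative ln (a * x) / x\<^sup>2) (at x)"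
    proof -
      fix x assume x: "c \<le> x"
      then have xp: "x > 0" using c1 by simp
      show "((\<lambda>x. - (1 + ln (a * x)) / x) has_real_derivative ln (a * x) / x\<^sup>2) (at x)"
        using xp a by (auto intro!: derivative_eq_intros simp: field_simps power2_eq_square)
    qed
    show "\<And>x. c \<le> x \<Longrightarrow> 0 \<le> ln (a * x) / x\<^sup>2"
    proof -
      fix x assume x: "c \<le> x"
      then have "a * x \<ge> 1" using ac a by (smt (verit) mult_left_mono)
      then show "0 \<le> ln (a * x) / x\<^sup>2" by simp
    qed
    show "((\<lambda>x. - (1 + ln (a * x)) / x) \<longlongrightarrow> 0) at_top" using F_tendsto[OF a] .
  qed
  also have "(0::real) - (- (1 + ln (a * c)) / c) = gg a"
  proof (cases "1 \<le> a")
    case True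
    then have "c = 1" unfolding c_def by (simp add: max_def field_simps)
    then show ?thesis using True by (simp add: gg_def)
  next
    case False
    then have "c = 1 / a" unfolding c_def using a by (simp add: max_def field_simps)
    then show ?thesis using False a by (simp add: gg_def)
  qed
  finally show ?thesis .
qed




context wseq
begin

definition Om where "Om u = (\<Sum>l. lp (u / \<mu> (l + 1)))"
definition Nf where "Nf s = (\<Sum>l. min 1 (s / \<mu> (l + 1)))"
definition Ff where "Ff t = (\<Sum>l. gg (t / \<mu> (l + 1)))"

lemma summ1: "summable (\<lambda>l. 1 / \<mu> (l + 1))" using summ_shift[of 1] .

lemma summ_c: "summable (\<lambda>l. c / \<mu> (l + 1))"
  using summable_mult[OF summ1, of c] by simp

lemma summ_lp: "u > 0 \<Longrightarrow> summable (\<lambda>l. lp (u / \<mu> (l + 1)))"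
  by (rule summable_comparison_test'[OF summ_c[of u]])
     (auto simp: lp_nonneg intro!: lp_le divide_pos_pos mu_pos)

lemma summ_Nf: "s > 0 \<Longrightarrow> summable (\<lambda>l. min 1 (s / \<mu> (l + 1)))"
  by (rule summable_comparison_test'[OF summ_c[of s]]) (auto simp: less_imp_le[OF mu_pos])

lemma summ_Ff: "t > 0 \<Longrightarrow> summable (\<lambda>l. gg (t / \<mu> (l + 1)))"
proof (rule summable_comparison_test'[OF summ_c[of t]])
  fix n assume t: "t > 0"
  have p: "t / \<mu> (n + 1) > 0" using t mu_pos by simp
  show "norm (gg (t / \<mu> (n + 1))) \<le> t / \<mu> (n + 1)"
    using gg_nonneg[OF p] gg_le[OF p] by simp
qed

lemma Om_nonneg: "u > 0 \<Longrightarrow> Om u \<ge> 0"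
  unfolding Om_def by (intro suminf_nonneg summ_lp lp_nonneg)

lemma Om_mono: "0 < u \<Longrightarrow> u \<le> v \<Longrightarrow> Om u \<le> Om v"
  unfolding Om_def
proof (intro suminf_le summ_lp allI)
  fix l assume "0 < u" "u \<le> v"
  then have "u / \<mu> (l + 1) \<le> v / \<mu> (l + 1)" using mu_pos[of "l+1"] by (intro divide_right_mono) auto
  then have "ln (u / \<mu> (l + 1)) \<le> ln (v / \<mu> (l + 1))" using \<open>0 < u\<close> mu_pos[of "l+1"] by (intro ln_mono) auto
  then show "lp (u / \<mu> (l + 1)) \<le> lp (v / \<mu> (l + 1))"
    unfolding lp_def by (rule max.mono[OF order_refl])
qed auto

lemma omega_eq: 
  assumes u: "u > 0"
  shows "omega_M \<mu> u = Om u"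
proof -
  have ex: "\<exists>n. u < \<mu> (Suc n)"
  proof -
    have "\<forall>\<^sub>F n in sequentially. u < \<mu> n" using mu_lim by (simp add: filterlim_at_top_dense)
    then obtain N where "\<And>n. n \<ge> N \<Longrightarrow> u < \<mu> n" by (auto simp: eventually_sequentially)
    then show ?thesis by (metis le_SucI order_refl)
  qed
  define n where "n = (LEAST n. u < \<mu> (Suc n))"
  have n1: "u < \<mu> (Suc n)" unfolding n_def using ex by (rule LeastI_ex)
  have n2: "\<mu> i \<le> u" if "1 \<le> i" "i \<le> n" for i
  proof -
    have "i - 1 < n" using that by auto
    then have "\<not> u < \<mu> (Suc (i - 1))" unfolding n_def by (rule not_less_Least)
    then show ?thesis using that by auto
  qed
  have n3: "lp (u / \<mu> (l + 1)) = 0" if "l \<ge> n" for l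
  proof -
    have "\<mu> (Suc n) \<le> \<mu> (l + 1)" using that by (intro mu_le) auto
    then have "u / \<mu> (l + 1) \<le> 1" using n1 mu_pos[of "l+1"] by (simp add: field_simps)
    then show ?thesis unfolding lp_def using u mu_pos[of "l+1"] by auto
  qed
  have lnk: "ln (u ^ k * M_seq \<mu> 0 / M_seq \<mu> k) = (\<Sum>i\<in>{1..k}. ln (u / \<mu> i))" for k
  proof -
    have "M_seq \<mu> 0 = 1" unfolding M_seq_def using mu0 by simp
    then have "ln (u ^ k * M_seq \<mu> 0 / M_seq \<mu> k) = real k * ln u - ln (M k)"
      using u M_pos[of k] by (simp add: ln_div ln_realpow)
    also have "\<dots> = (\<Sum>i\<in>{1..k}. ln u - ln (\<mu> i))" by (simp add: ln_M sum_subtractf)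
    also have "\<dots> = (\<Sum>i\<in>{1..k}. ln (u / \<mu> i))" using u by (intro sum.cong refl) (simp add: ln_div)
    finally show ?thesis .
  qed
  have shift: "(\<Sum>i\<in>{1..k}. f i) = (\<Sum>l<k. f (l + 1))" for k and f :: "nat \<Rightarrow> real"
    by (rule sum.reindex_bij_witness[where i="\<lambda>l. l + 1" and j="\<lambda>i. i - 1"]) auto
  have Om_eq: "Om u = (\<Sum>l<n. lp (u / \<mu> (l + 1)))"
    unfolding Om_def by (rule suminf_finite) (use n3 in \<open>auto simp: not_less\<close>)
  have le: "(\<Sum>i\<in>{1..k}. ln (u / \<mu> i)) \<le> Om u" for k
  proof -
    have "(\<Sum>i\<in>{1..k}. ln (u / \<mu> i)) \<le> (\<Sum>i\<in>{1..k}. lp (u / \<mu> i))"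
      by (intro sum_mono) (simp add: lp_def)
    also have "\<dots> = (\<Sum>l<k. lp (u / \<mu> (l + 1)))" by (rule shift)
    also have "\<dots> \<le> Om u" unfolding Om_def by (intro sum_le_suminf summ_lp u) (auto simp: lp_nonneg)
    finally show ?thesis .
  qed
  have att: "(\<Sum>i\<in>{1..n}. ln (u / \<mu> i)) = Om u"
  proof -
    have "(\<Sum>i\<in>{1..n}. ln (u / \<mu> i)) = (\<Sum>i\<in>{1..n}. lp (u / \<mu> i))"
    proof (intro sum.cong refl)
      fix i assume "i \<in> {1..n}"
      then have "1 \<le> u / \<mu> i" using n2[of i] mu_pos[of i] by auto
      then show "ln (u / \<mu> i) = lp (u / \<mu> i)" unfolding lp_def by simp
    qed
    also have "\<dots> = (\<Sum>l<n. lp (u / \<mu> (l + 1)))" by (rule shift)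
    finally show ?thesis using Om_eq by simp
  qed
  have "(SUP k. ln (u ^ k * M_seq \<mu> 0 / M_seq \<mu> k)) = Om u"
    unfolding lnk by (rule cSup_eq_maximum) (use le att in \<open>auto intro: range_eqI[of _ _ n]\<close>)
  then show ?thesis unfolding omega_M_def using u by simp
qed

lemma omega_mono: "mono (omega_M \<mu>)"
proof (rule monoI)
  fix u v :: real assume uv: "u \<le> v"
  show "omega_M \<mu> u \<le> omega_M \<mu> v"
  proof (cases "u > 0")
    case True
    then show ?thesis using uv omega_eq[of u] omega_eq[of v] Om_mono[of u v] by simp
  next
    case False
    then have "omega_M \<mu> u = 0" unfolding omega_M_def by simp
    moreover have "omega_M \<mu> v \<ge> 0"
    proof (cases "v > 0")
      case True then show ?thesis using omega_eq[OF True] Om_nonneg[OF True] by simp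
    next
      case False then show ?thesis unfolding omega_M_def by simp
    qed
    ultimately show ?thesis by simp
  qed
qed

lemma omega_meas[measurable]: "omega_M \<mu> \<in> borel_measurable borel"
  using omega_mono by (rule borel_measurable_mono)

end



lemma lp_meas[measurable]: "lp \<in> borel_measurable borel"
  unfolding lp_def[abs_def] by measurable

context wseq
begin

lemma kappa_bounds:
  assumes t: "t \<ge> 1"
  shows "Ff t \<le> kappa (omega_tilde \<mu>) t \<and> kappa (omega_tilde \<mu>) t \<le> Ff t + 2 * gg (2 * t)"
proof -
  define h where "h s = indicator {1..} s *\<^sub>R (omega_tilde \<mu> (t * s) / s\<^sup>2)" for s
  define f where "f l s = ennreal (lp ((t / \<mu> (l + 1)) * s) / s\<^sup>2) * indicator {1..} s" for l s
  define q where "q s = ennreal (lp ((2 * t) * s) / s\<^sup>2) * indicator {1..} s" for s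
  have kap: "kappa (omega_tilde \<mu>) t = integral\<^sup>L lborel h"
    unfolding kappa_def set_lebesgue_integral_def h_def by simp
  have hmeas: "h \<in> borel_measurable lborel" unfolding h_def omega_tilde_def by measurable
  have tp: "t > 0" using t by simp
  have ptw: "(\<Sum>l. f l s) = ennreal (omega_M \<mu> (t * s) / s\<^sup>2) * indicator {1..} s
          \<and> ennreal (h s) = ennreal (omega_M \<mu> (t * s) / s\<^sup>2) * indicator {1..} s
                          + ennreal (ln (1 + (t * s)\<^sup>2) / s\<^sup>2) * indicator {1..} s" for s
  proof (cases "s \<ge> 1")
    case False
    then show ?thesis by (simp add: f_def h_def)
  next
    case True
    then have ts: "t * s > 0" using tp by simp
    have e1: "lp ((t / \<mu> (l + 1)) * s) / s\<^sup>2 = lp (t * s / \<mu> (l + 1)) / s\<^sup>2" for l by (simp add: field_simps)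
    have "(\<Sum>l. f l s) = (\<Sum>l. ennreal (lp (t * s / \<mu> (l + 1)) / s\<^sup>2))"
      unfolding f_def using True e1 by simp
    also have "\<dots> = ennreal (\<Sum>l. lp (t * s / \<mu> (l + 1)) / s\<^sup>2)"
    proof (rule suminf_ennreal2)
      show "summable (\<lambda>l. lp (t * s / \<mu> (l + 1)) / s\<^sup>2)" by (rule summable_divide[OF summ_lp[OF ts]])
    qed (simp add: lp_nonneg)
    also have "(\<Sum>l. lp (t * s / \<mu> (l + 1)) / s\<^sup>2) = omega_M \<mu> (t * s) / s\<^sup>2"
      using omega_eq[OF ts] suminf_divide[OF summ_lp[OF ts], of "s\<^sup>2"] unfolding Om_def by simp
    finally have A: "(\<Sum>l. f l s) = ennreal (omega_M \<mu> (t * s) / s\<^sup>2) * indicator {1..} s"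
      using True by simp
    have nn1: "omega_M \<mu> (t * s) / s\<^sup>2 \<ge> 0" using omega_eq[OF ts] Om_nonneg[OF ts] by simp
    have nn2: "ln (1 + (t * s)\<^sup>2) / s\<^sup>2 \<ge> 0" by simp
    have "ennreal (h s) = ennreal (omega_M \<mu> (t * s) / s\<^sup>2 + ln (1 + (t * s)\<^sup>2) / s\<^sup>2)"
      unfolding h_def omega_tilde_def using True by (simp add: add_divide_distrib)
    also have "\<dots> = ennreal (omega_M \<mu> (t * s) / s\<^sup>2) + ennreal (ln (1 + (t * s)\<^sup>2) / s\<^sup>2)"
      using nn1 nn2 by (rule ennreal_plus)
    finally show ?thesis using A True by simp
  qed
  have q_bound: "ennreal (ln (1 + (t * s)\<^sup>2) / s\<^sup>2) * indicator {1..} s \<le> 2 * q s" for s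
  proof (cases "s \<ge> 1")
    case False then show ?thesis by (simp add: q_def)
  next
    case True
    then have ts1: "t * s \<ge> 1" using t mult_mono[of 1 t 1 s] by simp
    have sq: "(t * s)\<^sup>2 \<ge> 1" using ts1 by (simp add: one_le_power)
    have "(2 * t * s)\<^sup>2 = 4 * (t * s)\<^sup>2" by (simp add: power2_eq_square)
    then have "1 + (t * s)\<^sup>2 \<le> (2 * t * s)\<^sup>2" using sq by linarith
    then have "ln (1 + (t * s)\<^sup>2) \<le> ln ((2 * t * s)\<^sup>2)" using sq by (intro ln_mono) auto
    also have "\<dots> = 2 * ln (2 * t * s)" using ts1 by (simp add: ln_realpow)
    also have "\<dots> \<le> 2 * lp (2 * t * s)" unfolding lp_def by simp
    finally have "ln (1 + (t * s)\<^sup>2) / s\<^sup>2 \<le> 2 * (lp (2 * t * s) / s\<^sup>2)" using True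
      by (simp add: divide_right_mono)
    then have "ennreal (ln (1 + (t * s)\<^sup>2) / s\<^sup>2) \<le> ennreal (2 * (lp (2 * t * s) / s\<^sup>2))"
      by (rule ennreal_leI)
    also have "\<dots> = 2 * ennreal (lp (2 * t * s) / s\<^sup>2)"
      using ennreal_mult[of 2 "lp (2 * t * s) / s\<^sup>2"] lp_nonneg[of "2 * t * s"] by simp
    finally show ?thesis using True by (simp add: q_def mult.assoc)
  qed
  have fmeas: "\<And>l. f l \<in> borel_measurable lborel" unfolding f_def by measurable
  have qmeas: "q \<in> borel_measurable lborel" unfolding q_def by measurable
  have If: "(\<integral>\<^sup>+s. (\<Sum>l. f l s) \<partial>lborel) = ennreal (Ff t)"
  proof -
    have "(\<integral>\<^sup>+s. (\<Sum>l. f l s) \<partial>lborel) = (\<Sum>l. \<integral>\<^sup>+s. f l s \<partial>lborel)"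
      by (rule nn_integral_suminf) (rule fmeas)
    also have "\<dots> = (\<Sum>l. ennreal (gg (t / \<mu> (l + 1))))"
      unfolding f_def using tp mu_pos by (subst integral_lp) auto
    also have "\<dots> = ennreal (Ff t)" unfolding Ff_def
      using tp mu_pos by (intro suminf_ennreal2 summ_Ff) (auto intro!: gg_nonneg)
    finally show ?thesis .
  qed
  have Iq: "(\<integral>\<^sup>+s. q s \<partial>lborel) = ennreal (gg (2 * t))"
    unfolding q_def using tp by (intro integral_lp) auto
  define I where "I = (\<integral>\<^sup>+s. ennreal (h s) \<partial>lborel)"
  have low: "ennreal (Ff t) \<le> I"
  proof -
    have "(\<integral>\<^sup>+s. (\<Sum>l. f l s) \<partial>lborel) \<le> I" unfolding I_def
      by (intro nn_integral_mono) (simp add: ptw)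
    then show ?thesis using If by simp
  qed
  have up: "I \<le> ennreal (Ff t + 2 * gg (2 * t))"
  proof -
    have "I \<le> (\<integral>\<^sup>+s. (\<Sum>l. f l s) + 2 * q s \<partial>lborel)" unfolding I_def
    proof (intro nn_integral_mono)
      fix s
      have "ennreal (h s) = (\<Sum>l. f l s) + ennreal (ln (1 + (t * s)\<^sup>2) / s\<^sup>2) * indicator {1..} s"
        using ptw[of s] by simp
      also have "\<dots> \<le> (\<Sum>l. f l s) + 2 * q s" using q_bound[of s] by (rule add_left_mono)
      finally show "ennreal (h s) \<le> (\<Sum>l. f l s) + 2 * q s" .
    qed
    also have "\<dots> = (\<integral>\<^sup>+s. (\<Sum>l. f l s) \<partial>lborel) + (\<integral>\<^sup>+s. 2 * q s \<partial>lborel)"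
      by (rule nn_integral_add) (use fmeas qmeas in auto)
    also have "\<dots> = ennreal (Ff t) + 2 * ennreal (gg (2 * t))"
      using nn_integral_cmult[OF qmeas, of 2] Iq If by simp
    also have "ennreal (Ff t) + 2 * ennreal (gg (2 * t)) = ennreal (Ff t + 2 * gg (2 * t))"
    proof -
      have "Ff t \<ge> 0" unfolding Ff_def using tp mu_pos by (intro suminf_nonneg summ_Ff) (auto intro!: gg_nonneg)
      moreover have "gg (2 * t) \<ge> 0" using tp by (intro gg_nonneg) auto
      ultimately show ?thesis by (simp add: ennreal_plus ennreal_mult)
    qed
    finally show ?thesis .
  qed
  have nonneg: "AE s in lborel. 0 \<le> h s"
  proof (rule AE_I2)
    fix s
    show "0 \<le> h s"
    proof (cases "s \<ge> 1")
      case True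
      then have ts: "t * s > 0" using tp by simp
      then show ?thesis unfolding h_def omega_tilde_def using omega_eq[OF ts] Om_nonneg[OF ts] True by simp
    qed (simp add: h_def)
  qed
  have kapI: "kappa (omega_tilde \<mu>) t = enn2real I"
    unfolding kap I_def by (rule integral_eq_nn_integral[OF hmeas nonneg])
  have Ffnn: "Ff t \<ge> 0" unfolding Ff_def using tp mu_pos by (intro suminf_nonneg summ_Ff) (auto intro!: gg_nonneg)
  have gnn: "gg (2 * t) \<ge> 0" using tp by (intro gg_nonneg) auto
  have fin: "I < top" using up by (simp add: le_less_trans)
  then obtain r where r: "I = ennreal r" "r \<ge> 0" by (cases I) auto
  have "Ff t \<le> r" using low r Ffnn by simp
  moreover have "r \<le> Ff t + 2 * gg (2 * t)"
  proof -
    have "ennreal r \<le> ennreal (Ff t + 2 * gg (2 * t))" using up r by simp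
    then show ?thesis using Ffnn gnn by (subst (asm) ennreal_le_iff) auto
  qed
  ultimately show ?thesis using kapI r by simp
qed

end



lemma gg_convex:
  assumes a: "a > 0" and b: "b > 0"
  shows "gg a + min 1 a * ln (b / a) \<le> gg b"
proof -
  have lnba: "ln (b / a) = ln b - ln a" using a b by (simp add: ln_div)
  show ?thesis
  proof (cases "1 \<le> a")
    case True
    then have "gg a + min 1 a * ln (b / a) = 1 + ln b" using lnba by (simp add: gg_def)
    also have "\<dots> \<le> gg b" using ln_le_minus_one[OF b] by (simp add: gg_def)
    finally show ?thesis .
  next
    case False
    then have ga: "gg a + min 1 a * ln (b / a) = a + a * ln (b / a)" by (simp add: gg_def)
    show ?thesis
    proof (cases "1 \<le> b")
      case True
      have l1: "ln (1 / a) \<le> 1 / a - 1" using a by (intro ln_le_minus_one) auto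
      then have "- ln a \<le> 1 / a - 1" using a by (simp add: ln_div)
      then have "a * (- ln a) \<le> a * (1 / a - 1)" using a by (intro mult_left_mono) auto
      then have alna: "- a * ln a \<le> 1 - a" using a by (simp add: algebra_simps)
      have "(1 - a) * ln b \<ge> 0" using False True by simp
      then have h1: "a * ln b \<le> ln b" by (simp add: algebra_simps)
      have h2: "a * ln (b / a) = a * ln b - a * ln a" unfolding lnba by (simp add: right_diff_distrib)
      have "a + a * ln (b / a) \<le> 1 + ln b" using h1 h2 alna by linarith
      then show ?thesis using ga True by (simp add: gg_def)
    next
      case F2: False
      have "ln (b / a) \<le> b / a - 1" using a b by (intro ln_le_minus_one) auto
      then have "a * ln (b / a) \<le> a * (b / a - 1)" using a by (intro mult_left_mono) auto
      then have "a + a * ln (b / a) \<le> b" using a by (simp add: algebra_simps)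
      then show ?thesis using ga F2 by (simp add: gg_def)
    qed
  qed
qed

context wseq
begin

lemma Ff_support:
  assumes s: "s > 0" and t: "t > 0"
  shows "Ff s + Nf s * ln (t / s) \<le> Ff t"
proof -
  have e1: "(\<Sum>l. gg (s / \<mu> (l + 1))) + (\<Sum>l. min 1 (s / \<mu> (l + 1)) * ln (t / s))
      = (\<Sum>l. gg (s / \<mu> (l + 1)) + min 1 (s / \<mu> (l + 1)) * ln (t / s))"
    by (rule suminf_add[OF summ_Ff[OF s] summable_mult2[OF summ_Nf[OF s]]])
  have e2: "Nf s * ln (t / s) = (\<Sum>l. min 1 (s / \<mu> (l + 1)) * ln (t / s))"
    unfolding Nf_def by (rule suminf_mult2[OF summ_Nf[OF s]])
  have "Ff s + Nf s * ln (t / s) = (\<Sum>l. gg (s / \<mu> (l + 1)) + min 1 (s / \<mu> (l + 1)) * ln (t / s))"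
    unfolding e2 unfolding Ff_def by (rule e1)
  also have "\<dots> \<le> Ff t" unfolding Ff_def
  proof (rule suminf_le)
    fix l
    have p1: "s / \<mu> (l + 1) > 0" "t / \<mu> (l + 1) > 0" using s t mu_pos[of "l+1"] by auto
    have "(t / \<mu> (l + 1)) / (s / \<mu> (l + 1)) = t / s" using mu_pos[of "l+1"] by simp
    then show "gg (s / \<mu> (l + 1)) + min 1 (s / \<mu> (l + 1)) * ln (t / s) \<le> gg (t / \<mu> (l + 1))"
      using gg_convex[OF p1] by simp
  next
    show "summable (\<lambda>l. gg (s / \<mu> (l + 1)) + min 1 (s / \<mu> (l + 1)) * ln (t / s))"
      by (intro summable_add summ_Ff s summable_mult2 summ_Nf)
  qed (rule summ_Ff[OF t])
  finally show ?thesis .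
qed

lemma Nf_ge:
  assumes k: "k \<ge> 1" and s: "s \<ge> nu k"
  shows "real k \<le> Nf s"
proof -
  have sp: "s > 0" using nu_pos[OF k] s by simp
  have nn: "\<And>l. 0 \<le> min 1 (s / \<mu> (l + 1))" using sp mu_pos by (simp add: less_imp_le)
  show ?thesis
  proof (cases "\<exists>l\<ge>k. \<mu> l \<le> s")
    case True
    then obtain l where l: "l \<ge> k" "\<mu> l \<le> s" by auto
    have "real k = (\<Sum>i<k. min 1 (s / \<mu> (i + 1)))"
    proof -
      have "\<And>i. i < k \<Longrightarrow> min 1 (s / \<mu> (i + 1)) = 1"
      proof -
        fix i assume "i < k"
        then have "\<mu> (i + 1) \<le> s" using l mu_le[of "i+1" l] by auto
        then show "min 1 (s / \<mu> (i + 1)) = 1" using mu_pos[of "i+1"] by simp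
      qed
      then show ?thesis by simp
    qed
    also have "\<dots> \<le> Nf s" unfolding Nf_def by (intro sum_le_suminf summ_Nf sp nn) auto
    finally show ?thesis .
  next
    case False
    then have big: "\<And>l. l \<ge> k \<Longrightarrow> s < \<mu> l" by auto
    have "Nf s = (\<Sum>n. min 1 (s / \<mu> (n + (k - 1) + 1))) + (\<Sum>i<k - 1. min 1 (s / \<mu> (i + 1)))"
      unfolding Nf_def by (rule suminf_split_initial_segment[OF summ_Nf[OF sp]])
    also have "(\<Sum>n. min 1 (s / \<mu> (n + (k - 1) + 1))) = (\<Sum>n. s * (1 / \<mu> (n + k)))"
    proof (rule suminf_cong)
      fix n
      have e: "n + (k - 1) + 1 = n + k" using k by simp
      have "s < \<mu> (n + k)" by (rule big) simp
      then show "min 1 (s / \<mu> (n + (k - 1) + 1)) = s * (1 / \<mu> (n + k))"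
        unfolding e using mu_pos[of "n+k"] by simp
    qed
    also have "\<dots> = s * T k" unfolding tail_sum_def by (rule suminf_mult[OF summ_shift])
    moreover have "0 \<le> (\<Sum>i<k - 1. min 1 (s / \<mu> (i + 1)))" by (intro sum_nonneg nn)
    ultimately have "Nf s \<ge> s * T k" by linarith
    moreover have "s * T k \<ge> nu k * T k" using s T_pos[of k] by (intro mult_right_mono) auto
    ultimately show ?thesis using nu_T[of k] by simp
  qed
qed

lemma Ff_nonneg: "t > 0 \<Longrightarrow> Ff t \<ge> 0"
proof -
  assume t: "t > 0"
  have p: "\<And>n. t / \<mu> (n + 1) > 0" using t mu_pos by simp
  show ?thesis unfolding Ff_def by (intro suminf_nonneg summ_Ff[OF t] gg_nonneg p)
qed

lemma Ff_lower: "t > 0 \<Longrightarrow> real k * ln t - lP k \<le> Ff t"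
proof (induction k arbitrary: t)
  case 0 then show ?case using Ff_nonneg by (simp add: lP_def)
next
  case (Suc k)
  define v where "v = nu (Suc k)"
  have vp: "v > 0" unfolding v_def by (rule nu_pos) simp
  have lPs: "lP (Suc k) = lP k + ln v" unfolding lP_def v_def by simp
  show ?case
  proof (cases "t < v")
    case True
    then have "ln t \<le> ln v" using Suc.prems by simp
    then show ?thesis using Suc.IH[OF Suc.prems] lPs by (simp add: algebra_simps)
  next
    case False
    then have tv: "v \<le> t" by simp
    have Nv: "real (Suc k) \<le> Nf v" unfolding v_def by (rule Nf_ge) auto
    have lnp: "ln (t / v) \<ge> 0" using tv vp by simp
    have "real (Suc k) * ln (t / v) \<le> Nf v * ln (t / v)" using Nv lnp by (rule mult_right_mono)
    moreover have "Ff v + Nf v * ln (t / v) \<le> Ff t" using Ff_support[OF vp Suc.prems] .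
    moreover have "real k * ln v - lP k \<le> Ff v" using Suc.IH[OF vp] .
    moreover have "ln (t / v) = ln t - ln v" using vp Suc.prems by (simp add: ln_div)
    ultimately show ?thesis using lPs by (simp add: algebra_simps)
  qed
qed

end

context wseq_mg
begin

lemma gg_le_lp: "a > 0 \<Longrightarrow> gg a \<le> 1 + lp a"
  unfolding gg_def lp_def by auto

lemma Ff_upper:
  assumes k: "k \<ge> 1"
  shows "Ff (nu k) \<le> real k * ln (nu k) - lP k + real k * (2 + ln D)"
proof -
  define v where "v = nu k"
  have vp: "v > 0" unfolding v_def using nu_pos[OF k] .
  have vT: "v * T k = real k" unfolding v_def by (rule nu_T)
  have Dp: "D > 0" using D1 by simp
  have split: "Ff v = (\<Sum>n. gg (v / \<mu> (n + (k - 1) + 1))) + (\<Sum>l<k - 1. gg (v / \<mu> (l + 1)))"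
    unfolding Ff_def by (rule suminf_split_initial_segment[OF summ_Ff[OF vp]])
  have tail: "(\<Sum>n. gg (v / \<mu> (n + (k - 1) + 1))) \<le> real k"
  proof -
    have e: "\<And>n. n + (k - 1) + 1 = n + k" using k by simp
    have "(\<Sum>n. gg (v / \<mu> (n + (k - 1) + 1))) \<le> (\<Sum>n. v * (1 / \<mu> (n + k)))"
    proof (rule suminf_le)
      fix n show "gg (v / \<mu> (n + (k - 1) + 1)) \<le> v * (1 / \<mu> (n + k))"
        unfolding e using gg_le[of "v / \<mu> (n + k)"] vp mu_pos[of "n+k"] by simp
    next
      show "summable (\<lambda>n. gg (v / \<mu> (n + (k - 1) + 1)))"
        using summable_ignore_initial_segment[OF summ_Ff[OF vp], of "k - 1"] by (simp add: add.assoc)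
      show "summable (\<lambda>n. v * (1 / \<mu> (n + k)))" by (intro summable_mult summ_shift)
    qed
    also have "\<dots> = v * T k" unfolding tail_sum_def by (rule suminf_mult[OF summ_shift])
    finally show ?thesis using vT by simp
  qed
  have head_term: "gg (v / \<mu> j) \<le> 1 + ln D + ln (v / nu j)" if j: "1 \<le> j" "j \<le> k" for j
  proof -
    have nj: "nu j > 0" using nu_pos j by simp
    have nuv: "nu j \<le> v" unfolding v_def using j by (intro nu_mono) simp
    have "real j \<le> D * \<mu> j * T j" by (rule T_lower)
    then have njD: "nu j \<le> D * \<mu> j" unfolding nu_def using T_pos[of j] by (simp add: field_simps)
    have "v / \<mu> j \<le> D * v / nu j" using njD nj vp mu_pos[of j]
      by (simp add: field_simps mult_left_mono mult.commute)
    moreover have "D * v / nu j \<ge> 1"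
    proof -
      have "v / nu j \<ge> 1" using nuv nj by simp
      then have "D * (v / nu j) \<ge> 1 * 1" using D1 by (intro mult_mono) auto
      then show ?thesis by simp
    qed
    ultimately have "lp (v / \<mu> j) \<le> ln (D * v / nu j)"
      unfolding lp_def using vp mu_pos[of j] by (auto intro: ln_mono)
    also have "\<dots> = ln D + ln (v / nu j)" using Dp vp nj by (simp add: ln_mult ln_div)
    finally show ?thesis using gg_le_lp[of "v / \<mu> j"] vp mu_pos[of j] by simp
  qed
  have head: "(\<Sum>l<k - 1. gg (v / \<mu> (l + 1))) \<le> real k * (1 + ln D) + (real k * ln v - lP k)"
  proof -
    have "(\<Sum>l<k - 1. gg (v / \<mu> (l + 1))) \<le> (\<Sum>l<k - 1. (1 + ln D) + ln (v / nu (l + 1)))"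
      using head_term by (intro sum_mono) auto
    also have "\<dots> = real (k - 1) * (1 + ln D) + (\<Sum>l<k - 1. ln (v / nu (l + 1)))"
      by (simp add: sum.distrib)
    also have "(\<Sum>l<k - 1. ln (v / nu (l + 1))) \<le> (\<Sum>l<k. ln (v / nu (l + 1)))"
    proof (rule sum_mono2)
      show "\<And>b. b \<in> {..<k} - {..<k - 1} \<Longrightarrow> 0 \<le> ln (v / nu (b + 1))"
      proof -
        fix b assume "b \<in> {..<k} - {..<k - 1}"
        then have "b + 1 = k" by auto
        then show "0 \<le> ln (v / nu (b + 1))" using vp unfolding v_def by simp
      qed
    qed auto
    also have "(\<Sum>l<k. ln (v / nu (l + 1))) = (\<Sum>j\<in>{1..k}. ln (v / nu j))"
      by (rule sum.reindex_bij_witness[where i="\<lambda>j. j - 1" and j="\<lambda>l. l + 1"]) auto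
    also have "\<dots> = (\<Sum>j\<in>{1..k}. ln v - ln (nu j))"
    proof (rule sum.cong[OF refl])
      fix j assume "j \<in> {1..k}"
      then have "nu j > 0" using nu_pos by simp
      then show "ln (v / nu j) = ln v - ln (nu j)" using vp by (simp add: ln_div)
    qed
    also have "\<dots> = real k * ln v - lP k" by (simp add: sum_subtractf lP_def)
    finally have "(\<Sum>l<k - 1. gg (v / \<mu> (l + 1))) \<le> real (k - 1) * (1 + ln D) + (real k * ln v - lP k)"
      by simp
    moreover have "real (k - 1) * (1 + ln D) \<le> real k * (1 + ln D)"
      using D1 by (intro mult_right_mono) auto
    ultimately show ?thesis by simp
  qed
  show ?thesis using split tail head unfolding v_def[symmetric] by (simp add: algebra_simps)
qed

end



lemma equiv_half:
  fixes X Y P :: "nat \<Rightarrow> real"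
  assumes X: "\<And>k. k \<ge> 1 \<Longrightarrow> X k > 0" and Y: "\<And>k. k \<ge> 1 \<Longrightarrow> Y k > 0"
    and h1: "\<And>k. k \<ge> 1 \<Longrightarrow> ln (X k) \<le> P k + a1 * real k + b1"
    and h2: "\<And>k. k \<ge> 1 \<Longrightarrow> P k \<le> ln (Y k) + a2 * real k + b2"
  shows "\<exists>C. \<forall>k\<ge>1. (X k / Y k) powr (1 / real k) \<le> C"
proof (intro exI allI impI)
  fix k :: nat assume k: "k \<ge> 1"
  have kp: "real k > 0" using k by simp
  have q: "X k / Y k > 0" using X[OF k] Y[OF k] by simp
  have "ln (X k / Y k) = ln (X k) - ln (Y k)" using X[OF k] Y[OF k] by (simp add: ln_div)
  also have "\<dots> \<le> (a1 + a2) * real k + (b1 + b2)" using h1[OF k] h2[OF k] by (simp add: algebra_simps)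
  finally have l: "ln (X k / Y k) \<le> (a1 + a2) * real k + (b1 + b2)" .
  have "ln (X k / Y k) / real k \<le> ((a1 + a2) * real k + (b1 + b2)) / real k"
    using l kp by (intro divide_right_mono) auto
  also have "\<dots> = (a1 + a2) + (b1 + b2) / real k" using kp by (simp add: field_simps)
  also have "(b1 + b2) / real k \<le> \<bar>b1 + b2\<bar>"
  proof -
    have "(b1 + b2) / real k \<le> \<bar>b1 + b2\<bar> / real k" using kp by (intro divide_right_mono) auto
    also have "\<dots> \<le> \<bar>b1 + b2\<bar> / 1" using k by (intro divide_left_mono) auto
    also have "\<dots> = \<bar>b1 + b2\<bar>" by simp
    finally show ?thesis .
  qed
  finally have "1 / real k * ln (X k / Y k) \<le> a1 + a2 + \<bar>b1 + b2\<bar>" by simp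
  then show "(X k / Y k) powr (1 / real k) \<le> exp (a1 + a2 + \<bar>b1 + b2\<bar>)"
    unfolding powr_def using q by simp
qed

lemma equiv_via:
  fixes X Y P :: "nat \<Rightarrow> real"
  assumes X: "\<And>k. k \<ge> 1 \<Longrightarrow> X k > 0" and Y: "\<And>k. k \<ge> 1 \<Longrightarrow> Y k > 0"
    and X1: "\<And>k. k \<ge> 1 \<Longrightarrow> ln (X k) \<le> P k + a1 * real k + b1"
    and X2: "\<And>k. k \<ge> 1 \<Longrightarrow> P k \<le> ln (X k) + a2 * real k + b2"
    and Y1: "\<And>k. k \<ge> 1 \<Longrightarrow> ln (Y k) \<le> P k + a3 * real k + b3"
    and Y2: "\<And>k. k \<ge> 1 \<Longrightarrow> P k \<le> ln (Y k) + a4 * real k + b4"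
  shows "seq_equiv X Y"
  unfolding seq_equiv_def
  using equiv_half[of X Y P a1 b1 a4 b4] equiv_half[of Y X P a3 b3 a2 b2] assms by blast

lemma extend_bound:
  fixes X P :: "nat \<Rightarrow> real"
  assumes "\<And>k. k \<ge> k0 \<Longrightarrow> P k \<le> X k + a * real k + b"
  shows "\<exists>b'. \<forall>k. P k \<le> X k + a * real k + b'"
proof (intro exI allI)
  fix k
  define S where "S = (\<Sum>j<k0. \<bar>P j - X j - a * real j\<bar>)"
  show "P k \<le> X k + a * real k + (\<bar>b\<bar> + S)"
  proof (cases "k \<ge> k0")
    case True
    have "S \<ge> 0" unfolding S_def by (intro sum_nonneg) auto
    then show ?thesis using assms[OF True] by linarith
  next
    case False
    then have "\<bar>P k - X k - a * real k\<bar> \<le> S" unfolding S_def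
      by (intro member_le_sum) auto
    then show ?thesis by linarith
  qed
qed

context wseq_mg
begin

lemma nu_le_muD: "nu k \<le> D * \<mu> k"
  using T_lower[of k] T_pos[of k] unfolding nu_def by (simp add: field_simps)

lemma K_bounds:
  assumes nz: "normalization_of \<kappa>' (kappa (omega_tilde \<mu>))"
  shows "\<exists>b. \<forall>k\<ge>1. ln (K_seq \<kappa>' k) \<le> lP k + 0 * real k + b"
    and "\<exists>a b. \<forall>k\<ge>1. lP k \<le> ln (K_seq \<kappa>' k) + a * real k + b"
proof -
  obtain C0 where C0: "\<And>t. t \<ge> 0 \<Longrightarrow> \<bar>\<kappa>' t - kappa (omega_tilde \<mu>) t\<bar> \<le> C0"
    using nz unfolding normalization_of_def by blast
  have ub: "real k * y - \<kappa>' (exp y) \<le> lP k + C0" if y: "y \<ge> 0" for k y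
  proof -
    have t1: "exp y \<ge> 1" using y by simp
    have "\<kappa>' (exp y) \<ge> kappa (omega_tilde \<mu>) (exp y) - C0" using C0[of "exp y"] by auto
    moreover have "Ff (exp y) \<le> kappa (omega_tilde \<mu>) (exp y)" using kappa_bounds[OF t1] by simp
    moreover have "real k * ln (exp y) - lP k \<le> Ff (exp y)" by (rule Ff_lower) simp
    ultimately show ?thesis by simp
  qed
  have bdd: "bdd_above ((\<lambda>y. real k * y - \<kappa>' (exp y)) ` {0..})" for k
    using ub by (intro bdd_aboveI2[of _ _ "lP k + C0"]) auto
  have phiK: "ln (K_seq \<kappa>' k) = phi_star \<kappa>' (real k)" for k unfolding K_seq_def by simp
  show "\<exists>b. \<forall>k\<ge>1. ln (K_seq \<kappa>' k) \<le> lP k + 0 * real k + b"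
  proof (intro exI allI impI)
    fix k :: nat
    have "phi_star \<kappa>' (real k) \<le> lP k + C0" unfolding phi_star_def
      using ub by (intro cSUP_least) auto
    then show "ln (K_seq \<kappa>' k) \<le> lP k + 0 * real k + C0" using phiK by simp
  qed
  define k0 where "k0 = nat (ceiling (T 1)) + 1"
  have low: "lP k \<le> ln (K_seq \<kappa>' k) + (2 + ln D + 2 * ln C) * real k + (2 + 2 * ln 2 + 2 * ln D + 2 * ln (\<mu> 1) + C0)"
    if k: "k \<ge> k0" for k
  proof -
    have k1: "k \<ge> 1" using k unfolding k0_def by simp
    define v where "v = nu k"
    have vp: "v > 0" unfolding v_def using nu_pos[OF k1] .
    have v1: "v \<ge> 1"
    proof -
      have "T k \<le> T 1" using k1 by (rule T_mono)
      moreover have "T 1 \<le> real k" using k unfolding k0_def by linarith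
      ultimately have "T k \<le> real k" by simp
      then show ?thesis unfolding v_def nu_def using T_pos[of k] by simp
    qed
    have "real k * ln v - \<kappa>' (exp (ln v)) \<le> phi_star \<kappa>' (real k)" unfolding phi_star_def
      using v1 by (intro cSUP_upper bdd) auto
    then have A: "real k * ln v - \<kappa>' v \<le> phi_star \<kappa>' (real k)" using vp by simp
    have B: "\<kappa>' v \<le> kappa (omega_tilde \<mu>) v + C0" using C0[of v] vp by auto
    have Cc: "kappa (omega_tilde \<mu>) v \<le> Ff v + 2 * gg (2 * v)" using kappa_bounds[OF v1] by simp
    have Dd: "Ff v \<le> real k * ln v - lP k + real k * (2 + ln D)" unfolding v_def by (rule Ff_upper[OF k1])
    have gg2: "gg (2 * v) = 1 + ln 2 + ln v" using v1 vp by (simp add: gg_def ln_mult)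
    have lnv: "ln v \<le> ln D + real k * ln C + ln (\<mu> 1)"
    proof -
      have Cp: "C > 0" using C1 by simp
      have "D * \<mu> k \<le> D * (C ^ k * \<mu> 1)" using mu_le_pow[OF k1] D1 by (intro mult_left_mono) auto
      then have "v \<le> D * (C ^ k * \<mu> 1)" unfolding v_def using nu_le_muD[of k] by linarith
      then have "ln v \<le> ln (D * (C ^ k * \<mu> 1))" using vp by (intro ln_mono) auto
      also have "\<dots> = ln D + real k * ln C + ln (\<mu> 1)"
        using D1 Cp mu_pos[of 1] by (simp add: ln_mult ln_realpow)
      finally show ?thesis .
    qed
    have "lP k \<le> phi_star \<kappa>' (real k) + real k * (2 + ln D) + 2 * (1 + ln 2 + ln v) + C0"
      using A B Cc Dd gg2 by simp
    also have "\<dots> \<le> phi_star \<kappa>' (real k) + real k * (2 + ln D) + 2 * (1 + ln 2 + (ln D + real k * ln C + ln (\<mu> 1))) + C0"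
      using lnv by simp
    finally show ?thesis using phiK by (simp add: algebra_simps)
  qed
  then obtain b' where "\<forall>k. lP k \<le> ln (K_seq \<kappa>' k) + (2 + ln D + 2 * ln C) * real k + b'"
    using extend_bound[of k0 lP "\<lambda>k. ln (K_seq \<kappa>' k)"] by blast
  then show "\<exists>a b. \<forall>k\<ge>1. lP k \<le> ln (K_seq \<kappa>' k) + a * real k + b" by blast
qed

end


theorem theorem5p6:
  fixes \<mu> :: "nat \<Rightarrow> real" and \<kappa>' :: "real \<Rightarrow> real"
  assumes "weight_seq \<mu>"
    and "non_quasianalytic \<mu>"
    and "moderate_growth (M_seq \<mu>)"
    and "normalization_of \<kappa>' (kappa (omega_tilde \<mu>))"
  shows "seq_equiv (S_seq \<mu>) (K_seq \<kappa>') \<and> seq_equiv (K_seq \<kappa>') (L_seq \<mu>)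
         \<and> seq_equiv (S_seq \<mu>) (L_seq \<mu>)"
proof -
  interpret wseq \<mu> using assms(1,2) by unfold_locales
  obtain C where C: "C \<ge> 1" "\<And>j k. M_seq \<mu> (j + k) \<le> C ^ (j + k) * M_seq \<mu> j * M_seq \<mu> k"
    using assms(3) unfolding moderate_growth_def by blast
  interpret wseq_mg \<mu> C using C by unfold_locales
  have D0: "D + 1 > 0" using D1 by simp
  have S1: "\<And>k. k \<ge> 1 \<Longrightarrow> ln (S_seq \<mu> k) \<le> lP k + ln tone * real k + 0"
    using ln_S_upper by (simp add: mult.commute)
  have S2: "\<And>k. k \<ge> 1 \<Longrightarrow> lP k \<le> ln (S_seq \<mu> k) + (- ln (tone / (D + 1))) * real k + 0"
    using ln_S_lower by (simp add: algebra_simps)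
  have L1: "\<And>k. k \<ge> 1 \<Longrightarrow> ln (L_seq \<mu> k) \<le> lP k + (ln 2 + 1) * real k + 0"
    using ln_L_upper by (simp add: mult.commute)
  have L2: "\<And>k. k \<ge> 1 \<Longrightarrow> lP k \<le> ln (L_seq \<mu> k) + (ln tone - ln (tone / (D + 1))) * real k + 0"
  proof -
    fix k :: nat
    have "lP k \<le> ln (S_seq \<mu> k) - real k * ln (tone / (D + 1))" using ln_S_lower[of k] by simp
    also have "\<dots> \<le> ln (L_seq \<mu> k) + real k * ln tone - real k * ln (tone / (D + 1))"
      using ln_S_le_L[of k] by simp
    finally show "lP k \<le> ln (L_seq \<mu> k) + (ln tone - ln (tone / (D + 1))) * real k + 0"
      by (simp add: algebra_simps)
  qed
  obtain bK where K1: "\<And>k. k \<ge> 1 \<Longrightarrow> ln (K_seq \<kappa>' k) \<le> lP k + 0 * real k + bK"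
    using K_bounds(1)[OF assms(4)] by blast
  obtain aK bK' where K2: "\<And>k. k \<ge> 1 \<Longrightarrow> lP k \<le> ln (K_seq \<kappa>' k) + aK * real k + bK'"
    using K_bounds(2)[OF assms(4)] by blast
  have Sp: "\<And>k. k \<ge> 1 \<Longrightarrow> S_seq \<mu> k > 0" using S_pos by simp
  have Lp: "\<And>k. k \<ge> 1 \<Longrightarrow> L_seq \<mu> k > 0" using L_pos by simp
  have Kp: "\<And>k. k \<ge> 1 \<Longrightarrow> K_seq \<kappa>' k > 0" unfolding K_seq_def by simp
  have e1: "seq_equiv (S_seq \<mu>) (K_seq \<kappa>')"
    by (rule equiv_via[OF Sp Kp S1 S2 K1 K2])
  have e2: "seq_equiv (K_seq \<kappa>') (L_seq \<mu>)"
    by (rule equiv_via[OF Kp Lp K1 K2 L1 L2])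
  have e3: "seq_equiv (S_seq \<mu>) (L_seq \<mu>)"
    by (rule equiv_via[OF Sp Lp S1 S2 L1 L2])
  show ?thesis using e1 e2 e3 by blast
qed

end
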